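(* Let $P$ and $Q$ be autarkic tuples. Then $P\subseteq Q$, or $Q\subseteq P$, or $P\cap Q=\emptyset$.
   Context: Steiner Forest: finite undirected graph $G=(V,E)$, non-negative edge costs $(c_e)_{e\in E}$, set $\mathcal{D}$ of demand pairs $\{a,b\}\subseteq V$ (partners). For $U\subseteq V$, $\delta(U)$ is the set of edges with exactly one endpoint in $U$; $U$ separates $S$ if $S\cap U\ne\emptyset$ and $S\setminus U\ne\emptyset$; $\mathrm{sep}(U)$ is the set of demand pairs separated by $U$. The $\varepsilon$-extended moat-growing algorithm (fixed $\varepsilon\ge0$): time $t$ increases continuously from $0$ at unit rate; it maintains tight edges $F$ (initially empty), duals $y_S(t)\ge0$ (initially $0$), and budgets of components (initially $0$). $\mathcal{C}^t$ is the family of vertex sets of connected components of $(V,F)$. A component is demand-active if it contains a vertex not connected in $(V,F)$ to some partner; budget-active if not demand-active but with positive budget; active if either; $\mathcal{A}^t$ is the set of active components. Each $y_S$, $S\in\mathcal{A}^t$, grows at unit rate; budgets of demand-active components grow at rate $\varepsilon$ and of budget-active ones decrease at rate $1$; an edge $e$ with $\sum_{S:e\in\delta(S)}y_S(t)=c_e$ becomes tight and is added to $F$; merging components add budgets. $y_S=y_S(\infty)$. Autarkic pair: $\{A,B\}$ with $A,B\in\mathrm{supp}(y)$ disjoint, both in $\mathcal{A}^t$ for some $t$, $\mathrm{sep}(A)=\mathrm{sep}(B)\ne\emptyset$. Autarkic triple: $\{A_1,A_2,A_3\}$ pairwise disjoint, all in $\mathcal{A}^t$ for some $t$, each $\mathrm{sep}(A_i)\ne\emptyset$,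 $\mathrm{sep}(A_1\cup A_2\cup A_3)=\emptyset$. Autarkic tuples are autarkic pairs and triples. For autarkic tuples $P$ (with sets $A_i$) and $Q$ (with sets $B_j$), $P\subseteq Q$ means every $A_i$ is contained in some $B_j$, and $P\cap Q=\emptyset$ means $A_i\cap B_j=\emptyset$ for all $i,j$. *)

theory Defs
  imports Complex_Main
begin

text \<open>State of the epsilon-extended moat-growing algorithm at an event time:
  current time, tight edges F, duals y, budgets b.\<close>
record ('v, 'e) mstate =
  mtime :: real
  mF :: "'e set"
  my :: "'v set \<Rightarrow> real"
  mb :: "'v set \<Rightarrow> real"

text \<open>Instance: vertices V, edges E (multigraph; endp e = the two endpoints of e),
  costs c, demand pairs D, parameter eps.\<close>
locale moat =
  fixes V :: "'v set" and E :: "'e set" and endp :: "'e \<Rightarrow> 'v \<times> 'v"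
    and c :: "'e \<Rightarrow> real" and D :: "'v set set" and eps :: real
begin

definition delta :: "'v set \<Rightarrow> 'e set" where
  "delta U = {e \<in> E. (fst (endp e) \<in> U) \<noteq> (snd (endp e) \<in> U)}"

definition separates :: "'v set \<Rightarrow> 'v set \<Rightarrow> bool" where
  "separates U S \<longleftrightarrow> S \<inter> U \<noteq> {} \<and> S - U \<noteq> {}"

definition sep :: "'v set \<Rightarrow> 'v set set" where
  "sep U = {S \<in> D. separates U S}"

definition edge_rel :: "'e set \<Rightarrow> ('v \<times> 'v) set" where
  "edge_rel F = {(fst (endp e), snd (endp e)) | e. e \<in> F}
              \<union> {(snd (endp e), fst (endp e)) | e. e \<in> F}"

definition conn :: "'e set \<Rightarrow> 'v \<Rightarrow> 'v \<Rightarrow> bool" where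
  "conn F u v \<longleftrightarrow> (u, v) \<in> (edge_rel F)\<^sup>*"

definition comps :: "'e set \<Rightarrow> 'v set set" where
  "comps F = {{w \<in> V. conn F v w} | v. v \<in> V}"

definition demand_active :: "'e set \<Rightarrow> 'v set \<Rightarrow> bool" where
  "demand_active F S \<longleftrightarrow> (\<exists>v\<in>S. \<exists>p\<in>D. v \<in> p \<and> (\<exists>w\<in>p. \<not> conn F v w))"

definition budget_active :: "'e set \<Rightarrow> ('v set \<Rightarrow> real) \<Rightarrow> 'v set \<Rightarrow> bool" where
  "budget_active F b S \<longleftrightarrow> \<not> demand_active F S \<and> b S > 0"

definition actives :: "'e set \<Rightarrow> ('v set \<Rightarrow> real) \<Rightarrow> 'v set set" where
  "actives F b = {S \<in> comps F. demand_active F S \<or> budget_active F b S}"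

definition load :: "('v set \<Rightarrow> real) \<Rightarrow> 'e \<Rightarrow> real" where
  "load y e = (\<Sum>S\<in>{S. S \<subseteq> V \<and> e \<in> delta S}. y S)"

text \<open>rate at which the load of edge e grows\<close>
definition erate :: "'e set \<Rightarrow> ('v set \<Rightarrow> real) \<Rightarrow> 'e \<Rightarrow> nat" where
  "erate F b e = card {S \<in> actives F b. e \<in> delta S}"

text \<open>candidate lengths until the next event (edge becoming tight, budget running out)\<close>
definition cand :: "('v, 'e) mstate \<Rightarrow> real set" where
  "cand st =
     {(c e - load (my st) e) / real (erate (mF st) (mb st) e) | e.
        e \<in> E \<and> e \<notin> mF st \<and> erate (mF st) (mb st) e > 0}
   \<union> {mb st S | S. S \<in> actives (mF st) (mb st) \<and> budget_active (mF st) (mb st) S}"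

definition step :: "('v, 'e) mstate \<Rightarrow> ('v, 'e) mstate" where
  "step st =
    (if cand st = {} then st else
     (let F = mF st; b = mb st; A = actives F b; d = Min (cand st);
          y' = (\<lambda>S. my st S + (if S \<in> A then d else 0));
          b1 = (\<lambda>S. if S \<in> A then (if demand_active F S then b S + eps * d else b S - d)
                    else b S);
          F' = F \<union> {e \<in> E. load y' e = c e};
          b' = (\<lambda>S'. if S' \<in> comps F' then (\<Sum>S\<in>{S \<in> comps F. S \<subseteq> S'}. b1 S) else b1 S')
      in \<lparr>mtime = mtime st + d, mF = F', my = y', mb = b'\<rparr>))"

definition init :: "('v, 'e) mstate" where
  "init = \<lparr>mtime = 0, mF = {e \<in> E. c e = 0}, my = (\<lambda>_. 0), mb = (\<lambda>_. 0)\<rparr>"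

definition run :: "nat \<Rightarrow> ('v, 'e) mstate" where
  "run k = (step ^^ k) init"

definition active_at :: "real \<Rightarrow> 'v set set" where
  "active_at t = {S. \<exists>k. mtime (run k) \<le> t
       \<and> (t < mtime (run (Suc k)) \<or> run (Suc k) = run k)
       \<and> S \<in> actives (mF (run k)) (mb (run k))}"

definition yinf :: "'v set \<Rightarrow> real" where
  "yinf S = lim (\<lambda>k. my (run k) S)"

definition supp :: "'v set set" where
  "supp = {S. yinf S \<noteq> 0}"

definition autarkic_pair :: "'v set set \<Rightarrow> bool" where
  "autarkic_pair T \<longleftrightarrow> (\<exists>A B. T = {A, B} \<and> A \<in> supp \<and> B \<in> supp \<and> A \<inter> B = {}
      \<and> (\<exists>t. A \<in> active_at t \<and> B \<in> active_at t) \<and> sep A = sep B \<and> sep A \<noteq> {})"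

definition autarkic_triple :: "'v set set \<Rightarrow> bool" where
  "autarkic_triple T \<longleftrightarrow> (\<exists>A1 A2 A3. T = {A1, A2, A3}
      \<and> A1 \<inter> A2 = {} \<and> A1 \<inter> A3 = {} \<and> A2 \<inter> A3 = {}
      \<and> (\<exists>t. A1 \<in> active_at t \<and> A2 \<in> active_at t \<and> A3 \<in> active_at t)
      \<and> sep A1 \<noteq> {} \<and> sep A2 \<noteq> {} \<and> sep A3 \<noteq> {}
      \<and> sep (A1 \<union> A2 \<union> A3) = {})"

definition autarkic :: "'v set set \<Rightarrow> bool" where
  "autarkic T \<longleftrightarrow> autarkic_pair T \<or> autarkic_triple T"

end

definition tuple_sub :: "'v set set \<Rightarrow> 'v set set \<Rightarrow> bool" where
  "tuple_sub P Q \<longleftrightarrow> (\<forall>A\<in>P. \<exists>B\<in>Q. A \<subseteq> B)"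

definition tuple_disj :: "'v set set \<Rightarrow> 'v set set \<Rightarrow> bool" where
  "tuple_disj P Q \<longleftrightarrow> (\<forall>A\<in>P. \<forall>B\<in>Q. A \<inter> B = {})"

end

theory Submission imports Defs begin

locale moat_ok = moat V E endp c D eps for V :: "'v set" and E :: "'e set" and endp c D eps +
  assumes finV: "finite V" and finE: "finite E"
    and Dcard: "\<forall>p\<in>D. p \<subseteq> V \<and> card p = 2"
    and cnn: "\<forall>e\<in>E. c e \<ge> 0"
begin

lemma step_empty: "cand st = {} \<Longrightarrow> step st = st"
  by (simp add: step_def)

lemma step_ne:
  assumes "cand st \<noteq> {}"
  shows "mF (step st) = mF st \<union> {e\<in>E. load (\<lambda>S. my st S + (if S \<in> actives (mF st) (mb st) then Min (cand st) else 0)) e = c e}"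
    "my (step st) = (\<lambda>S. my st S + (if S \<in> actives (mF st) (mb st) then Min (cand st) else 0))"
    "mtime (step st) = mtime st + Min (cand st)"
  using assms by (simp_all add: step_def Let_def)

lemma step_F: "mF st \<subseteq> mF (step st)"
  by (cases "cand st = {}") (auto simp: step_empty step_ne)

lemma finite_comps: "finite (comps F)"
  unfolding comps_def using finV by (auto intro: finite_image_set)

lemma comps_sub: "S \<in> comps F \<Longrightarrow> S \<subseteq> V"
  unfolding comps_def by auto

lemma finite_actives: "finite (actives F b)"
  by (rule finite_subset[OF _ finite_comps[of F]]) (auto simp: actives_def)

lemma finite_cand: "finite (cand st)"
proof -
  have "finite {e. e \<in> E \<and> e \<notin> mF st \<and> erate (mF st) (mb st) e > 0}"
    using finE by auto
  hence 1: "finite {(c e - load (my st) e) / real (erate (mF st) (mb st) e) | e.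
        e \<in> E \<and> e \<notin> mF st \<and> erate (mF st) (mb st) e > 0}"
    by (rule finite_image_set)
  have "finite {S. S \<in> actives (mF st) (mb st) \<and> budget_active (mF st) (mb st) S}"
    using finite_actives by auto
  hence 2: "finite {mb st S | S. S \<in> actives (mF st) (mb st) \<and> budget_active (mF st) (mb st) S}"
    by (rule finite_image_set)
  show ?thesis unfolding cand_def using 1 2 by auto
qed

lemma load_add:
  assumes "A \<subseteq> Pow V"
  shows "load (\<lambda>S. y S + (if S \<in> A then d else 0)) e = load y e + d * real (card {S \<in> A. e \<in> delta S})"
proof -
  let ?M = "{S. S \<subseteq> V \<and> e \<in> delta S}"
  have fin: "finite ?M" by (rule finite_subset[of _ "Pow V"]) (auto simp: finV)
  have "load (\<lambda>S. y S + (if S \<in> A then d else 0)) e = load y e + (\<Sum>S\<in>?M. if S \<in> A then d else 0)"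
    unfolding load_def by (simp add: sum.distrib)
  also have "(\<Sum>S\<in>?M. if S \<in> A then d else 0) = (\<Sum>S\<in>?M \<inter> A. d)"
    using sum.inter_restrict[OF fin, of "\<lambda>_. d" A] by simp
  also have "?M \<inter> A = {S \<in> A. e \<in> delta S}" using assms by auto
  finally show ?thesis by (simp add: mult.commute)
qed

definition inv :: "('v,'e) mstate \<Rightarrow> bool" where
  "inv st \<longleftrightarrow> (\<forall>e\<in>E. e \<notin> mF st \<longrightarrow> load (my st) e \<le> c e)"

lemma cand_nonneg: assumes "inv st" "x \<in> cand st" shows "x \<ge> 0"
  using assms unfolding cand_def inv_def budget_active_def by auto

lemma Min_nonneg: assumes "inv st" "cand st \<noteq> {}" shows "Min (cand st) \<ge> 0"
  using cand_nonneg[OF assms(1) Min_in[OF finite_cand assms(2)]] .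

lemma erate_eq: "erate F b e = card {S \<in> actives F b. e \<in> delta S}"
  by (simp add: erate_def)

lemma actives_Pow: "actives F b \<subseteq> Pow V"
  using comps_sub by (auto simp: actives_def)

lemma inv_step: assumes "inv st" shows "inv (step st)"
proof (cases "cand st = {}")
  case True then show ?thesis using assms by (simp add: step_empty)
next
  case False
  let ?A = "actives (mF st) (mb st)"
  let ?d = "Min (cand st)"
  show ?thesis unfolding inv_def
  proof (intro ballI impI)
    fix e assume e: "e \<in> E" "e \<notin> mF (step st)"
    have ld: "load (my (step st)) e = load (my st) e + ?d * real (erate (mF st) (mb st) e)"
      unfolding step_ne(2)[OF False] erate_eq by (rule load_add[OF actives_Pow])
    have neq: "load (my (step st)) e \<noteq> c e" and eF: "e \<notin> mF st"
      using e step_ne(1,2)[OF False] by auto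
    have le0: "load (my st) e \<le> c e" using assms e eF by (auto simp: inv_def)
    show "load (my (step st)) e \<le> c e"
    proof (cases "erate (mF st) (mb st) e = 0")
      case True then show ?thesis using ld le0 by simp
    next
      case F2: False
      hence "(c e - load (my st) e) / real (erate (mF st) (mb st) e) \<in> cand st"
        unfolding cand_def using e(1) eF by blast
      hence "?d \<le> (c e - load (my st) e) / real (erate (mF st) (mb st) e)"
        using finite_cand by simp
      hence "?d * real (erate (mF st) (mb st) e) \<le> c e - load (my st) e"
        using F2 by (simp add: pos_le_divide_eq)
      then show ?thesis using ld by simp
    qed
  qed
qed

lemma run_Suc: "run (Suc k) = step (run k)"
  by (simp add: run_def)

lemma inv_run: "inv (run k)"
proof (induction k)
  case 0 show ?case using cnn by (auto simp: inv_def run_def init_def load_def)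
next
  case (Suc k) then show ?case by (simp add: run_Suc inv_step)
qed

lemma time_Suc: "mtime (run k) \<le> mtime (run (Suc k))"
  using Min_nonneg[OF inv_run] by (cases "cand (run k) = {}") (auto simp: run_Suc step_empty step_ne)

lemma time_mono: "k \<le> k' \<Longrightarrow> mtime (run k) \<le> mtime (run k')"
  by (induction k' rule: dec_induct) (auto intro: order_trans time_Suc)

lemma F_mono: "k \<le> k' \<Longrightarrow> mF (run k) \<subseteq> mF (run k')"
  by (induction k' rule: dec_induct) (auto simp: run_Suc dest: subsetD[OF step_F])

lemma fix_run0: "k \<le> k' \<Longrightarrow> run (Suc k) = run k \<Longrightarrow> run k' = run k"
proof (induction k' rule: dec_induct)
  case (step n)
  then have "run (Suc n) = step (run k)" by (simp add: run_Suc)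
  also have "\<dots> = run k" using step by (simp add: run_Suc[symmetric])
  finally show ?case .
qed simp

lemma fix_run: "run (Suc k) = run k \<Longrightarrow> k \<le> k' \<Longrightarrow> run k' = run k"
  using fix_run0 by blast

definition okk :: "real \<Rightarrow> nat \<Rightarrow> bool" where
  "okk t k \<longleftrightarrow> mtime (run k) \<le> t \<and> (t < mtime (run (Suc k)) \<or> run (Suc k) = run k)"

lemma okk_uniq_le: assumes "okk t k1" "okk t k2" "k1 \<le> k2" shows "run k1 = run k2"
proof (cases "run (Suc k1) = run k1")
  case True then show ?thesis using fix_run assms(3) by metis
next
  case False
  show ?thesis
  proof (cases "k1 = k2")
    case False
    hence "Suc k1 \<le> k2" using assms(3) by simp
    hence "mtime (run (Suc k1)) \<le> mtime (run k2)" by (rule time_mono)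
    then show ?thesis using assms(1,2) `run (Suc k1) \<noteq> run k1` by (auto simp: okk_def)
  qed simp
qed

lemma okk_uniq: "okk t k1 \<Longrightarrow> okk t k2 \<Longrightarrow> run k1 = run k2"
  by (metis le_cases okk_uniq_le)

lemma active_at_D: "S \<in> active_at t \<Longrightarrow> \<exists>k. okk t k \<and> S \<in> comps (mF (run k))"
  unfolding active_at_def okk_def actives_def by auto

lemma active_at_comps:
  assumes "T \<subseteq> active_at t" "T \<noteq> {}"
  shows "\<exists>k. T \<subseteq> comps (mF (run k))"
proof -
  obtain S0 where "S0 \<in> T" using assms by auto
  then obtain k0 where k0: "okk t k0" using active_at_D assms by blast
  have "T \<subseteq> comps (mF (run k0))"
  proof
    fix S assume "S \<in> T"
    then obtain k where "okk t k" "S \<in> comps (mF (run k))" using active_at_D assms by blast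
    then show "S \<in> comps (mF (run k0))" using okk_uniq[OF k0] by metis
  qed
  then show ?thesis by blast
qed

lemma sym_edge_rel: "sym (edge_rel F)"
  unfolding sym_def edge_rel_def by blast

lemma conn_sym: "conn F u v \<Longrightarrow> conn F v u"
  unfolding conn_def using sym_rtrancl[OF sym_edge_rel] by (auto simp: sym_def)

lemma conn_trans: "conn F u v \<Longrightarrow> conn F v w \<Longrightarrow> conn F u w"
  unfolding conn_def by simp

lemma conn_mono: "F \<subseteq> F' \<Longrightarrow> conn F u v \<Longrightarrow> conn F' u v"
  unfolding conn_def
proof -
  assume "F \<subseteq> F'" "(u, v) \<in> (edge_rel F)\<^sup>*"
  moreover have "edge_rel F \<subseteq> edge_rel F'" using \<open>F \<subseteq> F'\<close> unfolding edge_rel_def by blast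
  ultimately show "(u, v) \<in> (edge_rel F')\<^sup>*" using rtrancl_mono by blast
qed

lemma laminar:
  assumes "F \<subseteq> F'" "A \<in> comps F" "B \<in> comps F'" "A \<inter> B \<noteq> {}"
  shows "A \<subseteq> B"
proof -
  obtain v where v: "A = {w \<in> V. conn F v w}" using assms(2) by (auto simp: comps_def)
  obtain v' where v': "B = {w \<in> V. conn F' v' w}" using assms(3) by (auto simp: comps_def)
  obtain x where x: "x \<in> A" "x \<in> B" using assms(4) by auto
  show ?thesis
  proof
    fix w assume "w \<in> A"
    hence "conn F v w" "w \<in> V" "conn F v x" using x v by auto
    hence "conn F x w" using conn_sym conn_trans by blast
    hence "conn F' x w" using conn_mono assms(1) by blast
    moreover have "conn F' v' x" using x(2) v' by auto
    ultimately have "conn F' v' w" using conn_trans by blast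
    then show "w \<in> B" using v' `w \<in> V` by auto
  qed
qed


lemma sep_empty: "sep {} = {}"
  by (auto simp: sep_def separates_def)

lemma three_le_two:
  assumes "p \<in> D" "a \<in> p" "b \<in> p" "x \<in> p" "a \<noteq> b" "a \<noteq> x" "b \<noteq> x"
  shows False
proof -
  have c2: "card p = 2" using Dcard assms(1) by auto
  hence fin: "finite p" by (metis card.infinite zero_neq_numeral)
  have "card {a,b,x} \<le> card p" using assms(2-4) fin by (intro card_mono) auto
  moreover have "card {a,b,x} = 3" using assms(5-7) by simp
  ultimately show False using c2 by simp
qed

lemma sep_pair_union:
  assumes "A \<inter> B = {}" "sep A = sep B"
  shows "sep (A \<union> B) = {}"
proof (rule ccontr)
  assume "sep (A \<union> B) \<noteq> {}"
  then obtain p where p: "p \<in> D" "p \<inter> (A \<union> B) \<noteq> {}" "p - (A \<union> B) \<noteq> {}"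
    by (auto simp: sep_def separates_def)
  obtain x where x: "x \<in> p" "x \<notin> A" "x \<notin> B" using p(3) by auto
  show False
  proof (cases "p \<inter> A = {}")
    case False
    then obtain a where a: "a \<in> p" "a \<in> A" by auto
    have "p \<in> sep A" using p(1) a x by (auto simp: sep_def separates_def)
    hence "p \<in> sep B" using assms(2) by simp
    then obtain b where b: "b \<in> p" "b \<in> B" by (auto simp: sep_def separates_def)
    show False using three_le_two[OF p(1) a(1) b(1) x(1)] a b x assms(1) by auto
  next
    case True
    then obtain b where b: "b \<in> p" "b \<in> B" using p(2) by auto
    have "p \<in> sep B" using p(1) b x by (auto simp: sep_def separates_def)
    hence "p \<in> sep A" using assms(2) by simp
    then obtain a where a: "a \<in> p" "a \<in> A" by (auto simp: sep_def separates_def)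
    show False using three_le_two[OF p(1) a(1) b(1) x(1)] a b x assms(1) by auto
  qed
qed

definition good :: "'v set set \<Rightarrow> bool" where
  "good T \<longleftrightarrow> finite T \<and> card T \<le> 3 \<and> (\<forall>A\<in>T. \<forall>B\<in>T. A \<noteq> B \<longrightarrow> A \<inter> B = {})
     \<and> (\<forall>A\<in>T. sep A \<noteq> {} \<and> A \<noteq> {}) \<and> sep (\<Union>T) = {} \<and> (\<exists>k. T \<subseteq> comps (mF (run k)))"

lemma card3: "card {a, b, x} \<le> 3"
proof -
  have "card {b, x} \<le> 2" by (simp add: card_insert_if)
  moreover have "card {a, b, x} \<le> Suc (card {b, x})" by (simp add: card_insert_if)
  ultimately show ?thesis by simp
qed

lemma autarkic_good: assumes "autarkic T" shows "good T"
  using assms unfolding autarkic_def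
proof
  assume "autarkic_pair T"
  then obtain A B t where h: "T = {A, B}" "A \<inter> B = {}" "A \<in> active_at t" "B \<in> active_at t"
     "sep A = sep B" "sep A \<noteq> {}" unfolding autarkic_pair_def by blast
  have ne: "A \<noteq> {}" "B \<noteq> {}" using h(5,6) sep_empty by auto
  obtain k where "T \<subseteq> comps (mF (run k))" using active_at_comps[of T t] h by auto
  moreover have "card T \<le> 3" using h(1) by (simp add: card_insert_if)
  ultimately show "good T" unfolding good_def using h ne sep_pair_union[OF h(2,5)] by auto
next
  assume "autarkic_triple T"
  then obtain A1 A2 A3 t where h: "T = {A1, A2, A3}"
      "A1 \<inter> A2 = {}" "A1 \<inter> A3 = {}" "A2 \<inter> A3 = {}"
      "A1 \<in> active_at t" "A2 \<in> active_at t" "A3 \<in> active_at t"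
      "sep A1 \<noteq> {}" "sep A2 \<noteq> {}" "sep A3 \<noteq> {}" "sep (A1 \<union> A2 \<union> A3) = {}"
    unfolding autarkic_triple_def by blast
  have ne: "A1 \<noteq> {}" "A2 \<noteq> {}" "A3 \<noteq> {}" using h(8-10) sep_empty by auto
  obtain k where "T \<subseteq> comps (mF (run k))" using active_at_comps[of T t] h by auto
  moreover have "card T \<le> 3" using h(1) card3 by simp
  moreover have "\<Union>T = A1 \<union> A2 \<union> A3" using h(1) by auto
  ultimately show "good T" unfolding good_def using h ne by auto
qed

lemma comb:
  assumes g: "good P" and U: "sep U = {}" and split: "\<forall>A\<in>P. A \<subseteq> U \<or> A \<inter> U = {}"
  shows "(\<forall>A\<in>P. A \<subseteq> U) \<or> (\<forall>A\<in>P. A \<inter> U = {})"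
proof (rule ccontr)
  assume nc: "\<not> ?thesis"
  define X where "X = {A\<in>P. A \<subseteq> U}"
  define Y where "Y = P - X"
  have fin: "finite P" and c3: "card P \<le> 3" and sepP: "sep (\<Union>P) = {}"
    and nonsep: "\<forall>A\<in>P. sep A \<noteq> {}" using g by (auto simp: good_def)
  have Xne: "X \<noteq> {}" and Yne: "Y \<noteq> {}" using nc split unfolding X_def Y_def by auto
  have Ydisj: "\<forall>A\<in>Y. A \<inter> U = {}" using split unfolding X_def Y_def by auto
  have closed: "p \<subseteq> W" if "p \<in> D" "sep W = {}" "p \<inter> W \<noteq> {}" for p W
    using that by (auto simp: sep_def separates_def)
  have sX: "sep (\<Union>X) = {}"
  proof (rule ccontr)
    assume "sep (\<Union>X) \<noteq> {}"
    then obtain p where p: "p \<in> D" "p \<inter> \<Union>X \<noteq> {}" "p - \<Union>X \<noteq> {}"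
      by (auto simp: sep_def separates_def)
    have "p \<inter> U \<noteq> {}" using p(2) unfolding X_def by auto
    hence pU: "p \<subseteq> U" using closed[OF p(1) U] by blast
    have "p \<inter> \<Union>P \<noteq> {}" using p(2) unfolding X_def by auto
    hence pP: "p \<subseteq> \<Union>P" using closed[OF p(1) sepP] by blast
    have "p \<subseteq> \<Union>X"
    proof
      fix x assume "x \<in> p"
      then obtain A where "A \<in> P" "x \<in> A" "x \<in> U" using pU pP by auto
      then show "x \<in> \<Union>X" using split unfolding X_def by auto
    qed
    then show False using p(3) by auto
  qed
  have sY: "sep (\<Union>Y) = {}"
  proof (rule ccontr)
    assume "sep (\<Union>Y) \<noteq> {}"
    then obtain p where p: "p \<in> D" "p \<inter> \<Union>Y \<noteq> {}" "p - \<Union>Y \<noteq> {}"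
      by (auto simp: sep_def separates_def)
    have "p \<inter> U = {}"
    proof (rule ccontr)
      assume "p \<inter> U \<noteq> {}"
      hence "p \<subseteq> U" using closed[OF p(1) U] by blast
      then show False using p(2) Ydisj by auto
    qed
    have "p \<inter> \<Union>P \<noteq> {}" using p(2) unfolding Y_def by auto
    hence pP: "p \<subseteq> \<Union>P" using closed[OF p(1) sepP] by blast
    have "p \<subseteq> \<Union>Y"
    proof
      fix x assume "x \<in> p"
      then obtain A where "A \<in> P" "x \<in> A" "x \<notin> U" using pP `p \<inter> U = {}` by auto
      then show "x \<in> \<Union>Y" unfolding X_def Y_def by auto
    qed
    then show False using p(3) by auto
  qed
  have "card X + card Y = card P" unfolding Y_def using fin X_def
    by (metis (no_types, lifting) card_Diff_subset finite_subset le_add_diff_inverse mem_Collect_eq subsetI card_mono)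
  moreover have "card X \<ge> 1" "card Y \<ge> 1" using Xne Yne fin unfolding X_def Y_def
    by (auto simp: Suc_le_eq card_gt_0_iff)
  ultimately have "card X = 1 \<or> card Y = 1" using c3 by linarith
  then obtain A where "A \<in> P" "sep A = {}"
  proof
    assume "card X = 1"
    then obtain A where "X = {A}" by (rule card_1_singletonE)
    then show ?thesis using that sX unfolding X_def by auto
  next
    assume "card Y = 1"
    then obtain A where "Y = {A}" by (rule card_1_singletonE)
    then show ?thesis using that sY unfolding Y_def by auto
  qed
  then show False using nonsep by auto
qed

lemma dir:
  assumes gP: "good P" and gQ: "good Q" and kP: "P \<subseteq> comps (mF (run kP))"
    and kQ: "Q \<subseteq> comps (mF (run kQ))" and le: "kP \<le> kQ"
  shows "tuple_sub P Q \<or> tuple_disj P Q"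
proof -
  let ?U = "\<Union>Q"
  have sU: "sep ?U = {}" using gQ by (simp add: good_def)
  have FF: "mF (run kP) \<subseteq> mF (run kQ)" using F_mono[OF le] .
  have lam: "A \<subseteq> B" if "A \<in> P" "B \<in> Q" "A \<inter> B \<noteq> {}" for A B
    using laminar[OF FF, of A B] that kP kQ by auto
  have split: "\<forall>A\<in>P. A \<subseteq> ?U \<or> A \<inter> ?U = {}"
  proof
    fix A assume A: "A \<in> P"
    show "A \<subseteq> ?U \<or> A \<inter> ?U = {}"
    proof (cases "A \<inter> ?U = {}")
      case False
      then obtain B where "B \<in> Q" "A \<inter> B \<noteq> {}" by auto
      then show ?thesis using lam[OF A] by blast
    qed simp
  qed
  from comb[OF gP sU split] show ?thesis
  proof
    assume all: "\<forall>A\<in>P. A \<subseteq> ?U"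
    have "\<forall>A\<in>P. \<exists>B\<in>Q. A \<subseteq> B"
    proof
      fix A assume A: "A \<in> P"
      have "A \<noteq> {}" using gP A unfolding good_def by blast
      then obtain x where "x \<in> A" by blast
      then obtain B where "B \<in> Q" "A \<inter> B \<noteq> {}" using all A by blast
      then show "\<exists>B\<in>Q. A \<subseteq> B" using lam[OF A] by blast
    qed
    then show ?thesis by (simp add: tuple_sub_def)
  next
    assume "\<forall>A\<in>P. A \<inter> ?U = {}"
    then show ?thesis by (auto simp: tuple_disj_def)
  qed
qed

lemma main:
  assumes "autarkic P" "autarkic Q"
  shows "tuple_sub P Q \<or> tuple_sub Q P \<or> tuple_disj P Q"
proof -
  have gP: "good P" and gQ: "good Q" using autarkic_good assms by auto
  obtain kP where kP: "P \<subseteq> comps (mF (run kP))" using gP by (auto simp: good_def)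
  obtain kQ where kQ: "Q \<subseteq> comps (mF (run kQ))" using gQ by (auto simp: good_def)
  show ?thesis
  proof (cases "kP \<le> kQ")
    case True then show ?thesis using dir[OF gP gQ kP kQ] by blast
  next
    case False
    hence "tuple_sub Q P \<or> tuple_disj Q P" using dir[OF gQ gP kQ kP] by simp
    then show ?thesis by (auto simp: tuple_disj_def)
  qed
qed

end

theorem lemma4p10:
  fixes V :: "'v set" and E :: "'e set" and endp :: "'e \<Rightarrow> 'v \<times> 'v"
    and c :: "'e \<Rightarrow> real" and D :: "'v set set" and eps :: real
    and P Q :: "'v set set"
  assumes "finite V" and "finite E"
    and "\<forall>e\<in>E. fst (endp e) \<in> V \<and> snd (endp e) \<in> V"
    and "\<forall>e\<in>E. c e \<ge> 0"
    and "\<forall>p\<in>D. p \<subseteq> V \<and> card p = 2"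
    and "eps \<ge> 0"
    and "\<forall>p\<in>D. \<forall>u\<in>p. \<forall>w\<in>p. moat.conn endp E u w"
    and "moat.autarkic V E endp c D eps P"
    and "moat.autarkic V E endp c D eps Q"
  shows "tuple_sub P Q \<or> tuple_sub Q P \<or> tuple_disj P Q"
proof -
  interpret moat_ok V E endp c D eps
    using assms(1,2,4,5) by unfold_locales auto
  show ?thesis using main assms(8,9) by blast
qed

end
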